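(* Let $G$ be a finite group and $O=C_1\sqcup\dots\sqcup C_m$ a disjoint union of conjugacy classes of $G$, none equal to $\{1\}$, such that the elements of each class $C_i$ generate $G$. Then the power series $\chi_{(G,O)}(t_1,\dots,t_m)=\sum_{\bar k\in\mathbb Z_{\ge0}^m}h_{\bar k}t_1^{k_1}\cdots t_m^{k_m}$ is a rational function, where $h_{\bar k}$ is the number of elements $s\in S(G,O)^G_{\mathbf 1}$ with $\tau(s)=\bar k$.
   Context: The factorization semigroup $S(G,O)$ is generated by symbols $x_g$, $g\in O$, subject to $x_{g_1}x_{g_2}=x_{g_2}x_{g_2^{-1}g_1g_2}=x_{g_1g_2g_1^{-1}}x_{g_1}$ ($g_1,g_2\in O$); $\alpha_G:S(G,O)\to G$, $x_g\mapsto g$. For $s=x_{g_1}\cdots x_{g_n}$, $G_s$ is the subgroup generated by $g_1,\dots,g_n$ (well defined). $S(G,O)^G_{\mathbf 1}=\{s:G_s=G,\ \alpha_G(s)=1\}$. The type is $\tau(s)=(\tau_1(s),\dots,\tau_m(s))$, where $\tau_i(s)$ is the number of factors $x_g$ of $s$ with $g\in C_i$. *)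

theory Defs
  imports "HOL-Algebra.Algebra"
begin

text \<open>Words over Ocl represent elements of the factorization semigroup S(G,Ocl).
  One elementary (Hurwitz) move replaces an adjacent pair x_a x_b by
  x_b x_{b^-1 a b} or by x_{a b a^-1} x_a.\<close>

definition hurwitz_step :: "('a, 'b) monoid_scheme \<Rightarrow> 'a set \<Rightarrow> 'a list \<Rightarrow> 'a list \<Rightarrow> bool" where
  "hurwitz_step G Ocl w w' \<longleftrightarrow>
     (\<exists>u v a b. a \<in> Ocl \<and> b \<in> Ocl \<and> w = u @ [a, b] @ v \<and>
        (w' = u @ [b, inv\<^bsub>G\<^esub> b \<otimes>\<^bsub>G\<^esub> a \<otimes>\<^bsub>G\<^esub> b] @ v \<or>
         w' = u @ [a \<otimes>\<^bsub>G\<^esub> b \<otimes>\<^bsub>G\<^esub> inv\<^bsub>G\<^esub> a, a] @ v))"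

definition fact_equiv :: "('a, 'b) monoid_scheme \<Rightarrow> 'a set \<Rightarrow> 'a list \<Rightarrow> 'a list \<Rightarrow> bool" where
  "fact_equiv G Ocl = (\<lambda>w w'. hurwitz_step G Ocl w w' \<or> hurwitz_step G Ocl w' w)\<^sup>*\<^sup>*"

definition fact_class :: "('a, 'b) monoid_scheme \<Rightarrow> 'a set \<Rightarrow> 'a list \<Rightarrow> 'a list set" where
  "fact_class G Ocl w = {w'. fact_equiv G Ocl w w'}"

definition word_prod :: "('a, 'b) monoid_scheme \<Rightarrow> 'a list \<Rightarrow> 'a" where
  "word_prod G w = foldr (\<lambda>g h. g \<otimes>\<^bsub>G\<^esub> h) w \<one>\<^bsub>G\<^esub>"

definition word_type :: "(nat \<Rightarrow> 'a set) \<Rightarrow> nat \<Rightarrow> 'a list \<Rightarrow> (nat \<Rightarrow> nat)" where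
  "word_type C m w = (\<lambda>i. if i < m then length (filter (\<lambda>g. g \<in> C i) w) else 0)"

definition h_coeff :: "('a, 'b) monoid_scheme \<Rightarrow> 'a set \<Rightarrow> (nat \<Rightarrow> 'a set) \<Rightarrow> nat \<Rightarrow> (nat \<Rightarrow> nat) \<Rightarrow> nat" where
  "h_coeff G Ocl C m k = card (fact_class G Ocl `
      {w. set w \<subseteq> Ocl \<and> generate G (set w) = carrier G \<and> word_prod G w = \<one>\<^bsub>G\<^esub>
          \<and> word_type C m w = k})"

definition exps :: "nat \<Rightarrow> (nat \<Rightarrow> nat) set" where
  "exps m = {k. \<forall>i. m \<le> i \<longrightarrow> k i = 0}"

text \<open>A formal power series F in m variables (coefficients indexed by exps m)
  is a rational function: Q * F = P for polynomials P, Q with Q nonzero.\<close>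
definition rational_series :: "nat \<Rightarrow> ((nat \<Rightarrow> nat) \<Rightarrow> rat) \<Rightarrow> bool" where
  "rational_series m F \<longleftrightarrow>
     (\<exists>P Q :: (nat \<Rightarrow> nat) \<Rightarrow> rat.
        finite {k. P k \<noteq> 0} \<and> finite {k. Q k \<noteq> 0} \<and>
        {k. P k \<noteq> 0} \<subseteq> exps m \<and> {k. Q k \<noteq> 0} \<subseteq> exps m \<and>
        (\<exists>k. Q k \<noteq> 0) \<and>
        (\<forall>k \<in> exps m.
           (\<Sum>j \<in> {j \<in> exps m. \<forall>i. j i \<le> k i}. Q j * F (\<lambda>i. k i - j i)) = P k))"

definition is_conj_class :: "('a, 'b) monoid_scheme \<Rightarrow> 'a set \<Rightarrow> bool" where
  "is_conj_class G A \<longleftrightarrow>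
     (\<exists>g \<in> carrier G. A = {h \<otimes>\<^bsub>G\<^esub> g \<otimes>\<^bsub>G\<^esub> inv\<^bsub>G\<^esub> h | h. h \<in> carrier G})"

end

theory Submission
  imports Defs "HOL-Library.FuncSet"
begin


definition supp_in :: "nat set \<Rightarrow> (nat \<Rightarrow> nat) set" where
  "supp_in I = {t. \<forall>l. l \<notin> I \<longrightarrow> t l = 0}"

lemma dickson:
  assumes "finite I"
  shows "U \<subseteq> supp_in I \<Longrightarrow> (\<forall>t\<in>U. \<forall>t'\<in>supp_in I. t \<le> t' \<longrightarrow> t' \<in> U)
    \<Longrightarrow> \<exists>B. finite B \<and> B \<subseteq> U \<and> (\<forall>t\<in>U. \<exists>g\<in>B. g \<le> t)"
  using assms
proof (induction I arbitrary: U rule: finite_induct)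
  case empty
  have "U \<subseteq> {\<lambda>_. 0}" using empty(1) by (auto simp: supp_in_def)
  hence "finite U" using finite_subset by blast
  thus ?case by blast
next
  case (insert j I)
  define S where "S s = {t \<in> supp_in I. t(j:=s) \<in> U}" for s
  have Ssub: "S s \<subseteq> supp_in I" for s by (auto simp: S_def)
  have supp_upd: "t \<in> supp_in I \<Longrightarrow> t(j:=s) \<in> supp_in (insert j I)" for t s
    by (auto simp: supp_in_def)
  have Sup: "\<forall>t\<in>S s. \<forall>t'\<in>supp_in I. t \<le> t' \<longrightarrow> t' \<in> S s" for s
  proof (intro ballI impI)
    fix t t' assume "t \<in> S s" "t' \<in> supp_in I" "t \<le> t'"
    hence "t(j:=s) \<le> t'(j:=s)" "t(j:=s) \<in> U" by (auto simp: le_fun_def S_def)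
    thus "t' \<in> S s" using insert.prems(2) supp_upd[OF \<open>t' \<in> supp_in I\<close>] \<open>t' \<in> supp_in I\<close>
      by (auto simp: S_def)
  qed
  have Smono: "s \<le> s' \<Longrightarrow> S s \<subseteq> S s'" for s s'
  proof
    fix t assume "s \<le> s'" "t \<in> S s"
    hence "t(j:=s) \<le> t(j:=s')" "t(j:=s) \<in> U" "t \<in> supp_in I" by (auto simp: le_fun_def S_def)
    thus "t \<in> S s'" using insert.prems(2) supp_upd by (auto simp: S_def)
  qed
  define Sinf where "Sinf = (\<Union>s. S s)"
  have "Sinf \<subseteq> supp_in I" using Ssub by (auto simp: Sinf_def)
  moreover have "\<forall>t\<in>Sinf. \<forall>t'\<in>supp_in I. t \<le> t' \<longrightarrow> t' \<in> Sinf"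
    using Sup by (auto simp: Sinf_def)
  ultimately obtain Binf where Binf: "finite Binf" "Binf \<subseteq> Sinf" "\<forall>t\<in>Sinf. \<exists>g\<in>Binf. g \<le> t"
    using insert.IH[of Sinf] by auto
  have "\<forall>g\<in>Binf. \<exists>s. g \<in> S s" using Binf(2) by (auto simp: Sinf_def)
  then obtain sf where sf: "\<forall>g\<in>Binf. g \<in> S (sf g)" by metis
  define s0 where "s0 = Max (insert 0 (sf ` Binf))"
  have "g \<in> S s0" if "g \<in> Binf" for g
  proof -
    have "sf g \<le> s0" unfolding s0_def using Binf(1) that by (intro Max_ge) auto
    thus ?thesis using Smono sf that by blast
  qed
  hence stab: "S s \<subseteq> S s0" for s
  proof -
    assume gin: "\<And>g. g \<in> Binf \<Longrightarrow> g \<in> S s0"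
    show ?thesis
    proof
      fix t assume "t \<in> S s"
      hence "t \<in> Sinf" "t \<in> supp_in I" using Ssub by (auto simp: Sinf_def)
      then obtain g where "g \<in> Binf" "g \<le> t" using Binf(3) by blast
      thus "t \<in> S s0" using gin Sup \<open>t \<in> supp_in I\<close> by blast
    qed
  qed
  have "\<forall>s. \<exists>B. finite B \<and> B \<subseteq> S s \<and> (\<forall>t\<in>S s. \<exists>g\<in>B. g \<le> t)"
  proof
    fix s show "\<exists>B. finite B \<and> B \<subseteq> S s \<and> (\<forall>t\<in>S s. \<exists>g\<in>B. g \<le> t)"
      using insert.IH[of "S s"] Ssub[of s] Sup[of s] by auto
  qed
  then obtain Bf where Bf: "\<And>s. finite (Bf s)" "\<And>s. Bf s \<subseteq> S s" "\<And>s. \<forall>t\<in>S s. \<exists>g\<in>Bf s. g \<le> t"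
    by metis
  define B where "B = (\<Union>s\<in>{..s0}. (\<lambda>t. t(j:=s)) ` Bf s)"
  have "finite B" unfolding B_def using Bf(1) by auto
  moreover have "B \<subseteq> U" unfolding B_def using Bf(2) by (auto simp: S_def)
  moreover have "\<exists>g\<in>B. g \<le> t" if "t \<in> U" for t
  proof -
    have tsupp: "t \<in> supp_in (insert j I)" using that insert.prems(1) by auto
    define t0 where "t0 = t(j:=0)"
    have t0s: "t0 \<in> supp_in I" using tsupp by (auto simp: supp_in_def t0_def)
    have "t0(j := t j) = t" by (auto simp: t0_def)
    hence "t0 \<in> S (t j)" using t0s that by (auto simp: S_def)
    hence "t0 \<in> S (min (t j) s0)" using stab by (cases "t j \<le> s0") (auto simp: min_def)
    then obtain g where g: "g \<in> Bf (min (t j) s0)" "g \<le> t0" using Bf(3) by blast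
    have "g(j := min (t j) s0) \<in> B" unfolding B_def using g(1) by auto
    moreover have "g(j := min (t j) s0) \<le> t" unfolding le_fun_def
    proof
      fix x show "(g(j := min (t j) s0)) x \<le> t x"
        using g(2) by (cases "x = j") (auto simp: le_fun_def t0_def dest: spec[of _ x])
    qed
    ultimately show ?thesis by blast
  qed
  ultimately show ?case by blast
qed

lemma upset_threshold:
  assumes "finite I" "U \<subseteq> supp_in I" "\<forall>t\<in>U. \<forall>t'\<in>supp_in I. t \<le> t' \<longrightarrow> t' \<in> U"
  shows "\<exists>M. \<forall>t\<in>supp_in I. \<forall>i. M \<le> t i \<longrightarrow> t(i := t i + 1) \<in> U \<longrightarrow> t \<in> U"
proof -
  obtain B where B: "finite B" "B \<subseteq> U" "\<forall>t\<in>U. \<exists>g\<in>B. g \<le> t"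
    using dickson[OF assms(1,2,3)] by blast
  define M where "M = Suc (\<Sum>g\<in>B. \<Sum>l\<in>I. g l)"
  have gbound: "g i < M" if "g \<in> B" for g i
  proof (cases "i \<in> I")
    case True
    have "g i \<le> (\<Sum>l\<in>I. g l)" using True assms(1) by (intro member_le_sum) auto
    also have "\<dots> \<le> (\<Sum>g\<in>B. \<Sum>l\<in>I. g l)" using that B(1) by (intro member_le_sum) auto
    finally show ?thesis unfolding M_def by simp
  next
    case False
    hence "g i = 0" using that B(2) assms(2) by (auto simp: supp_in_def)
    thus ?thesis unfolding M_def by simp
  qed
  show ?thesis
  proof (intro exI[of _ M] ballI allI impI)
    fix t i assume "t \<in> supp_in I" "M \<le> t i" "t(i := t i + 1) \<in> U"
    then obtain g where g: "g \<in> B" "g \<le> t(i := t i + 1)" using B(3) by blast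
    have "g \<le> t"
      unfolding le_fun_def
    proof
      fix l show "g l \<le> t l"
        using g(2) gbound[OF g(1), of i] \<open>M \<le> t i\<close>
        by (cases "l = i") (auto simp: le_fun_def dest: spec[of _ l])
    qed
    thus "t \<in> U" using assms(3) g(1) B(2) \<open>t \<in> supp_in I\<close> by blast
  qed
qed


lemma antitone_gen:
  assumes "\<forall>t\<in>supp_in I. \<forall>i\<in>I. f (t(i := t i + 1)) \<le> (f t :: nat)" "finite I"
  shows "t \<in> supp_in I \<Longrightarrow> t' \<in> supp_in I \<Longrightarrow> t \<le> t' \<Longrightarrow> f t' \<le> f t"
proof (induction "\<Sum>l\<in>I. t' l - t l" arbitrary: t rule: less_induct)
  case less
  show ?case
  proof (cases "\<forall>l\<in>I. t l = t' l")
    case True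
    hence "t = t'" using less.prems by (auto simp: supp_in_def fun_eq_iff)
    thus ?thesis by simp
  next
    case False
    then obtain l where l: "l \<in> I" "t l \<noteq> t' l" by blast
    hence lt: "t l < t' l" using less.prems(3) by (auto simp: le_fun_def dest: spec[of _ l])
    define t1 where "t1 = t(l := t l + 1)"
    have t1s: "t1 \<in> supp_in I" using less.prems(1) l(1) by (auto simp: supp_in_def t1_def)
    have t1le: "t1 \<le> t'" using less.prems(3) lt by (auto simp: le_fun_def t1_def)
    have "(\<Sum>x\<in>I. t' x - t1 x) < (\<Sum>x\<in>I. t' x - t x)"
    proof (rule sum_strict_mono_ex1[OF assms(2)])
      show "\<forall>x\<in>I. t' x - t1 x \<le> t' x - t x" by (auto simp: t1_def)
      show "\<exists>a\<in>I. t' a - t1 a < t' a - t a" using l(1) lt by (auto simp: t1_def intro!: bexI[of _ l])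
    qed
    hence "f t' \<le> f t1" using less.hyps t1s less.prems(2) t1le by blast
    moreover have "f t1 \<le> f t" using assms(1) less.prems(1) l(1) unfolding t1_def by blast
    ultimately show ?thesis by linarith
  qed
qed

lemma antitone_stab:
  assumes "finite I" "\<forall>t\<in>supp_in I. \<forall>i\<in>I. f (t(i := t i + 1)) \<le> (f t :: nat)"
  shows "\<exists>M. \<forall>t\<in>supp_in I. \<forall>i\<in>I. M \<le> t i \<longrightarrow> f (t(i := t i + 1)) = f t"
proof -
  have anti: "\<And>t t'. t \<in> supp_in I \<Longrightarrow> t' \<in> supp_in I \<Longrightarrow> t \<le> t' \<Longrightarrow> f t' \<le> f t"
    using antitone_gen[OF assms(2,1)] by blast
  define U where "U v = {t \<in> supp_in I. f t < v}" for v
  have "\<forall>v. \<exists>M. \<forall>t\<in>supp_in I. \<forall>i. M \<le> t i \<longrightarrow> t(i := t i + 1) \<in> U v \<longrightarrow> t \<in> U v"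
  proof
    fix v
    show "\<exists>M. \<forall>t\<in>supp_in I. \<forall>i. M \<le> t i \<longrightarrow> t(i := t i + 1) \<in> U v \<longrightarrow> t \<in> U v"
    proof (rule upset_threshold[OF assms(1)])
      show "U v \<subseteq> supp_in I" by (auto simp: U_def)
      show "\<forall>t\<in>U v. \<forall>t'\<in>supp_in I. t \<le> t' \<longrightarrow> t' \<in> U v"
        using anti by (fastforce simp: U_def)
    qed
  qed
  then obtain Mf where Mf: "\<And>v. \<forall>t\<in>supp_in I. \<forall>i. Mf v \<le> t i \<longrightarrow> t(i := t i + 1) \<in> U v \<longrightarrow> t \<in> U v"
    by metis
  define V where "V = f (\<lambda>_. 0)"
  define M where "M = (\<Sum>v\<le>V. Mf v)"
  show ?thesis
  proof (intro exI[of _ M] ballI impI)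
    fix t i assume t: "t \<in> supp_in I" "i \<in> I" "M \<le> t i"
    let ?t' = "t(i := t i + 1)"
    have t's: "?t' \<in> supp_in I" using t by (auto simp: supp_in_def)
    have le: "f ?t' \<le> f t" using assms(2) t by blast
    have "(\<lambda>_. 0) \<in> supp_in I" by (simp add: supp_in_def)
    hence "f t \<le> V" unfolding V_def using anti t(1) by (simp add: le_fun_def)
    hence "Mf (f t) \<le> M" unfolding M_def by (intro member_le_sum) auto
    show "f ?t' = f t"
    proof (rule ccontr)
      assume "f ?t' \<noteq> f t"
      hence "?t' \<in> U (f t)" using le t's by (auto simp: U_def)
      hence "t \<in> U (f t)" using Mf[of "f t"] t(1) t(3) \<open>Mf (f t) \<le> M\<close> by force
      thus False by (simp add: U_def)
    qed
  qed
qed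

lemma finite_bounded_funs:
  "finite {k::nat\<Rightarrow>nat. (\<forall>l. m \<le> l \<longrightarrow> k l = 0) \<and> (\<forall>l. k l \<le> b l)}"
proof -
  have "{k::nat\<Rightarrow>nat. (\<forall>l. m \<le> l \<longrightarrow> k l = 0) \<and> (\<forall>l. k l \<le> b l)}
     \<subseteq> (\<lambda>f l. if l < m then f l else 0) ` (PiE {..<m} (\<lambda>l. {..b l}))"
  proof
    fix k assume k: "k \<in> {k::nat\<Rightarrow>nat. (\<forall>l. m \<le> l \<longrightarrow> k l = 0) \<and> (\<forall>l. k l \<le> b l)}"
    show "k \<in> (\<lambda>f l. if l < m then f l else 0) ` (PiE {..<m} (\<lambda>l. {..b l}))"
    proof (rule image_eqI[of _ _ "restrict k {..<m}"])
      show "k = (\<lambda>l. if l < m then restrict k {..<m} l else 0)"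
        using k by (auto simp: fun_eq_iff)
      show "restrict k {..<m} \<in> PiE {..<m} (\<lambda>l. {..b l})"
        using k by (auto simp: restrict_PiE_iff)
    qed
  qed
  moreover have "finite ((\<lambda>f l. if l < m then f l else 0) ` (PiE {..<m} (\<lambda>l. {..b l})))"
    by (intro finite_imageI finite_PiE) auto
  ultimately show ?thesis using finite_subset by blast
qed

lemma cell_stab:
  assumes n: "n \<ge> 1" and mono: "\<forall>k\<in>exps m. \<forall>i<m. K \<le> k i \<longrightarrow> F (k(i := k i + n)) \<le> (F k :: nat)"
  shows "\<exists>M. \<forall>k\<in>exps m. \<forall>i<m. M \<le> k i \<longrightarrow> F (k(i := k i + n)) = F k"
proof -
  define Base where "Base = {b::nat\<Rightarrow>nat. (\<forall>l. m \<le> l \<longrightarrow> b l = 0) \<and> (\<forall>l. b l \<le> K + n)}"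
  have finBase: "finite Base" unfolding Base_def by (rule finite_bounded_funs)
  define L where "L b = {l. l < m \<and> K \<le> b l}" for b :: "nat \<Rightarrow> nat"
  define fb where "fb b t = F (\<lambda>l. b l + n * t l)" for b t :: "nat \<Rightarrow> nat"
  have "\<forall>b\<in>Base. \<exists>M. \<forall>t\<in>supp_in (L b). \<forall>i\<in>L b. M \<le> t i \<longrightarrow> fb b (t(i := t i + 1)) = fb b t"
  proof
    fix b assume b: "b \<in> Base"
    show "\<exists>M. \<forall>t\<in>supp_in (L b). \<forall>i\<in>L b. M \<le> t i \<longrightarrow> fb b (t(i := t i + 1)) = fb b t"
    proof (rule antitone_stab)
      show "finite (L b)" unfolding L_def by auto
      show "\<forall>t\<in>supp_in (L b). \<forall>i\<in>L b. fb b (t(i := t i + 1)) \<le> fb b t"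
      proof (intro ballI)
        fix t i assume t: "t \<in> supp_in (L b)" and i: "i \<in> L b"
        define k where "k = (\<lambda>l. b l + n * t l)"
        have "k \<in> exps m" using b t by (auto simp: k_def exps_def Base_def supp_in_def L_def)
        moreover have "i < m" "K \<le> k i" using i by (auto simp: L_def k_def)
        ultimately have "F (k(i := k i + n)) \<le> F k" using mono by blast
        moreover have "(\<lambda>l. b l + n * (t(i := t i + 1)) l) = k(i := k i + n)"
          by (auto simp: k_def fun_eq_iff algebra_simps)
        ultimately show "fb b (t(i := t i + 1)) \<le> fb b t" by (simp add: fb_def k_def)
      qed
    qed
  qed
  then obtain Mb where Mb: "\<And>b. b \<in> Base \<Longrightarrow> \<forall>t\<in>supp_in (L b). \<forall>i\<in>L b. Mb b \<le> t i \<longrightarrow> fb b (t(i := t i + 1)) = fb b t"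
    by metis
  define S where "S = (\<Sum>b\<in>Base. Mb b)"
  define M where "M = K + n + n * S"
  show ?thesis
  proof (intro exI[of _ M] ballI allI impI)
    fix k i assume k: "k \<in> exps m" and i: "i < m" and Mk: "M \<le> k i"
    define b where "b l = (if k l < K then k l else K + (k l - K) mod n)" for l
    define t where "t l = (if k l < K then 0 else (k l - K) div n)" for l
    have kbt: "k = (\<lambda>l. b l + n * t l)"
    proof
      fix l show "k l = b l + n * t l"
        using mod_mult_div_eq[of "k l - K" n] by (auto simp: b_def t_def)
    qed
    have k0: "m \<le> l \<Longrightarrow> k l = 0" for l using k by (auto simp: exps_def)
    have bB: "b \<in> Base"
    proof -
      have "m \<le> l \<Longrightarrow> b l = 0" for l using k0[of l] by (auto simp: b_def)
      moreover have "b l \<le> K + n" for l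
        using n by (auto simp: b_def intro: less_imp_le_nat)
      ultimately show ?thesis by (auto simp: Base_def)
    qed
    have tL: "t \<in> supp_in (L b)"
      unfolding supp_in_def
    proof (intro CollectI allI impI)
      fix l assume "l \<notin> L b"
      thus "t l = 0" using k0[of l] by (cases "k l < K") (auto simp: L_def b_def t_def)
    qed
    have "K \<le> k i" using Mk by (simp add: M_def)
    hence iL: "i \<in> L b" using i by (auto simp: L_def b_def)
    have "Mb b \<le> S" unfolding S_def using finBase bB by (intro member_le_sum) auto
    have "n * Suc S \<le> k i - K" using Mk by (simp add: M_def)
    hence "n * Suc S div n \<le> (k i - K) div n" by (rule div_le_mono)
    hence "Suc S \<le> t i" using n \<open>K \<le> k i\<close> by (simp add: t_def)
    hence ti: "Mb b \<le> t i" using \<open>Mb b \<le> S\<close> by simp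
    have kl: "k l = b l + n * t l" for l using fun_cong[OF kbt, of l] by simp
    have k': "k(i := k i + n) = (\<lambda>l. b l + n * (t(i := t i + 1)) l)"
      by (auto simp: fun_eq_iff kl algebra_simps)
    have "F (k(i := k i + n)) = fb b (t(i := t i + 1))" by (simp add: k' fb_def)
    also have "\<dots> = fb b t" using Mb[OF bB] tL iL ti by blast
    also have "\<dots> = F k" by (simp add: fb_def kbt[symmetric])
    finally show "F (k(i := k i + n)) = F k" .
  qed
qed

lemma periodic_rational:
  assumes n: "n \<ge> 1" and per: "\<forall>k\<in>exps m. \<forall>i<m. M \<le> k i \<longrightarrow> F (k(i := k i + n)) = F k"
  shows "rational_series m (\<lambda>k. of_nat (F k))"
proof -
  define Q :: "(nat\<Rightarrow>nat) \<Rightarrow> rat" where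
    "Q j = (if j \<in> exps m \<and> (\<forall>l. j l = 0 \<or> j l = n) then (-1) ^ card {l. j l = n} else 0)" for j
  define J where "J k = {j \<in> exps m. \<forall>i. j i \<le> k i}" for k :: "nat \<Rightarrow> nat"
  define P :: "(nat\<Rightarrow>nat) \<Rightarrow> rat" where
    "P k = (if k \<in> exps m then \<Sum>j\<in>J k. Q j * of_nat (F (\<lambda>i. k i - j i)) else 0)" for k
  have finJ: "finite (J k)" for k
    by (rule finite_subset[OF _ finite_bounded_funs[of m k]]) (auto simp: J_def exps_def)
  have key: "P k = 0" if k: "k \<in> exps m" and i: "i < m" and ki: "M + n \<le> k i" for k i
  proof -
    define \<sigma> where "\<sigma> j = j(i := if j i = 0 then n else if j i = n then 0 else j i)" for j :: "nat \<Rightarrow> nat"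
    define tm where "tm j = Q j * of_nat (F (\<lambda>l. k l - j l))" for j
    have \<sigma>\<sigma>: "\<sigma> (\<sigma> j) = j" for j using n by (auto simp: \<sigma>_def fun_eq_iff)
    have \<sigma>J: "\<sigma> j \<in> J k" if "j \<in> J k" for j
      using that i ki by (auto simp: J_def exps_def \<sigma>_def)
    have case0: "tm (\<sigma> j) = - tm j" if j: "j \<in> J k" "j i = 0" for j
    proof -
      have finset: "finite {l. j l = n}"
      proof (rule finite_subset[of _ "{..<m}"])
        show "{l. j l = n} \<subseteq> {..<m}"
        proof
          fix x assume x: "x \<in> {l. j l = n}"
          show "x \<in> {..<m}"
          proof (rule ccontr)
            assume "x \<notin> {..<m}"
            hence "j x = 0" using j by (auto simp: J_def exps_def)
            thus False using x n by simp
          qed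
        qed
      qed simp
      have "{l. \<sigma> j l = n} = insert i {l. j l = n}" using j n by (auto simp: \<sigma>_def)
      hence card: "card {l. \<sigma> j l = n} = Suc (card {l. j l = n})" using finset j n by simp
      have jm: "j \<in> exps m" "\<sigma> j \<in> exps m" using j \<sigma>J by (auto simp: J_def)
      have cond: "(\<forall>l. \<sigma> j l = 0 \<or> \<sigma> j l = n) \<longleftrightarrow> (\<forall>l. j l = 0 \<or> j l = n)"
      proof
        assume A: "\<forall>l. \<sigma> j l = 0 \<or> \<sigma> j l = n"
        show "\<forall>l. j l = 0 \<or> j l = n"
        proof
          fix l show "j l = 0 \<or> j l = n" using A[rule_format, of l] j(2) by (cases "l = i") (auto simp: \<sigma>_def)
        qed
      next
        assume A: "\<forall>l. j l = 0 \<or> j l = n"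
        show "\<forall>l. \<sigma> j l = 0 \<or> \<sigma> j l = n"
        proof
          fix l show "\<sigma> j l = 0 \<or> \<sigma> j l = n" using A[rule_format, of l] j(2) by (cases "l = i") (auto simp: \<sigma>_def)
        qed
      qed
      have Qs: "Q (\<sigma> j) = - Q j" using jm cond card by (simp add: Q_def)
      define x where "x = (\<lambda>l. k l - \<sigma> j l)"
      have xm: "x \<in> exps m" using k by (auto simp: x_def exps_def)
      have "x i = k i - n" using j by (simp add: x_def \<sigma>_def)
      hence "M \<le> x i" using ki by simp
      hence "F (x(i := x i + n)) = F x" using per xm i by blast
      moreover have "x(i := x i + n) = (\<lambda>l. k l - j l)"
        using j ki by (auto simp: x_def \<sigma>_def fun_eq_iff)
      ultimately have Feq: "F (\<lambda>l. k l - \<sigma> j l) = F (\<lambda>l. k l - j l)" by (simp add: x_def)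
      show ?thesis by (simp add: tm_def Qs Feq)
    qed
    have neg: "tm (\<sigma> j) = - tm j" if j: "j \<in> J k" for j
    proof -
      consider "j i = 0" | "j i = n" | "j i \<noteq> 0" "j i \<noteq> n" by blast
      thus ?thesis
      proof cases
        case 1 thus ?thesis using case0 j by blast
      next
        case 2
        have "(\<sigma> j) i = 0" using 2 n by (simp add: \<sigma>_def)
        hence "tm (\<sigma> (\<sigma> j)) = - tm (\<sigma> j)" using case0 \<sigma>J j by blast
        thus ?thesis by (simp add: \<sigma>\<sigma>)
      next
        case 3
        hence "\<sigma> j = j" by (simp add: \<sigma>_def)
        moreover have "Q j = 0" using 3 by (auto simp: Q_def)
        ultimately show ?thesis by (simp add: tm_def)
      qed
    qed
    have "(\<Sum>j\<in>J k. tm j) = (\<Sum>j\<in>J k. tm (\<sigma> j))"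
      by (rule sum.reindex_bij_witness[of _ \<sigma> \<sigma>]) (auto simp: \<sigma>\<sigma> \<sigma>J)
    also have "\<dots> = - (\<Sum>j\<in>J k. tm j)" using neg by (simp add: sum_negf)
    finally have "(\<Sum>j\<in>J k. tm j) = 0" by simp
    thus ?thesis using k by (simp add: P_def tm_def)
  qed
  have Q0: "Q (\<lambda>_. 0) = 1" using n by (simp add: Q_def exps_def)

    have fP: "finite {k. P k \<noteq> 0}"
    proof (rule finite_subset[OF _ finite_bounded_funs[of m "\<lambda>_. M + n"]])
      show "{k. P k \<noteq> 0} \<subseteq> {k. (\<forall>l. m \<le> l \<longrightarrow> k l = 0) \<and> (\<forall>l. k l \<le> M + n)}"
      proof
        fix k assume "k \<in> {k. P k \<noteq> 0}"
        hence Pk: "P k \<noteq> 0" by simp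
        hence km: "k \<in> exps m" by (auto simp: P_def split: if_splits)
        have "k l \<le> M + n" for l
        proof (cases "l < m")
          case True thus ?thesis using key[OF km True] Pk by (cases "M + n \<le> k l") auto
        next
          case False thus ?thesis using km by (auto simp: exps_def)
        qed
        thus "k \<in> {k. (\<forall>l. m \<le> l \<longrightarrow> k l = 0) \<and> (\<forall>l. k l \<le> M + n)}" using km by (auto simp: exps_def)
      qed
    qed
    have fQ: "finite {k. Q k \<noteq> 0}"
    proof (rule finite_subset[OF _ finite_bounded_funs[of m "\<lambda>_. n"]])
      show "{k. Q k \<noteq> 0} \<subseteq> {k. (\<forall>l. m \<le> l \<longrightarrow> k l = 0) \<and> (\<forall>l. k l \<le> n)}"
      proof
        fix k assume "k \<in> {k. Q k \<noteq> 0}"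
        hence A: "k \<in> exps m" "\<forall>l. k l = 0 \<or> k l = n" by (auto simp: Q_def split: if_splits)
        have "k l \<le> n" for l using A(2)[rule_format, of l] by auto
        thus "k \<in> {k. (\<forall>l. m \<le> l \<longrightarrow> k l = 0) \<and> (\<forall>l. k l \<le> n)}" using A(1) by (auto simp: exps_def)
      qed
    qed
    have sP: "{k. P k \<noteq> 0} \<subseteq> exps m" by (auto simp: P_def split: if_splits)
    have sQ: "{k. Q k \<noteq> 0} \<subseteq> exps m" by (auto simp: Q_def split: if_splits)
    have eQ: "\<exists>k. Q k \<noteq> 0" using Q0 by (intro exI[of _ "\<lambda>_. 0"]) simp
    have eq: "\<forall>k\<in>exps m. (\<Sum>j\<in>{j \<in> exps m. \<forall>i. j i \<le> k i}. Q j * of_nat (F (\<lambda>i. k i - j i))) = P k"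
      by (simp add: P_def J_def)
    show ?thesis unfolding rational_series_def using fP fQ sP sQ eQ eq by blast
qed




context group
begin

lemma conj_comp:
  assumes "a \<in> carrier G" "h1 \<in> carrier G" "h2 \<in> carrier G"
  shows "h1 \<otimes> (h2 \<otimes> a \<otimes> inv h2) \<otimes> inv h1 = (h1 \<otimes> h2) \<otimes> a \<otimes> inv (h1 \<otimes> h2)"
  using assms by (simp add: m_assoc inv_mult_group)

lemma conj_cancel1:
  assumes "a \<in> carrier G" "h \<in> carrier G"
  shows "inv h \<otimes> (h \<otimes> a \<otimes> inv h) \<otimes> h = a"
  using assms by (simp add: m_assoc[symmetric]) (simp add: m_assoc)

lemma conj_cancel2:
  assumes "a \<in> carrier G" "h \<in> carrier G"
  shows "h \<otimes> (inv h \<otimes> a \<otimes> h) \<otimes> inv h = a"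
  using assms by (simp add: m_assoc[symmetric]) (simp add: m_assoc)

lemma word_prod_carrier: "set w \<subseteq> carrier G \<Longrightarrow> word_prod G w \<in> carrier G"
  by (induction w) (auto simp: word_prod_def)

lemma word_prod_Cons: "word_prod G (x # w) = x \<otimes> word_prod G w"
  by (simp add: word_prod_def)

lemma word_prod_Nil: "word_prod G [] = \<one>"
  by (simp add: word_prod_def)

lemma word_prod_append:
  "set u \<subseteq> carrier G \<Longrightarrow> set w \<subseteq> carrier G \<Longrightarrow> word_prod G (u @ w) = word_prod G u \<otimes> word_prod G w"
  by (induction u) (auto simp: word_prod_Cons word_prod_Nil m_assoc word_prod_carrier)

lemma word_prod_replicate: "g \<in> carrier G \<Longrightarrow> word_prod G (replicate k g) = g [^] k"
  using nat_pow_Suc2[of g] by (induction k) (auto simp: word_prod_Cons word_prod_Nil simp del: nat_pow_Suc)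

end


locale hsetup = group +
  fixes Ocl :: "'a set" and C :: "nat \<Rightarrow> 'a set" and m :: nat
  assumes fin: "finite (carrier G)"
    and cls: "\<And>i. i < m \<Longrightarrow> is_conj_class G (C i)"
    and disj: "\<And>i j. i < m \<Longrightarrow> j < m \<Longrightarrow> i \<noteq> j \<Longrightarrow> C i \<inter> C j = {}"
    and Odef: "Ocl = (\<Union>i<m. C i)"
begin

abbreviation HE :: "'a list \<Rightarrow> 'a list \<Rightarrow> bool" where
  "HE w w' \<equiv> fact_equiv G Ocl w w'"

lemma C_sub: "i < m \<Longrightarrow> C i \<subseteq> carrier G"
  using cls[of i] by (auto simp: is_conj_class_def)

lemma C_conj: assumes "i < m" "x \<in> C i" "h \<in> carrier G" shows "h \<otimes> x \<otimes> inv h \<in> C i"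
proof -
  obtain g where g: "g \<in> carrier G" "C i = {h' \<otimes> g \<otimes> inv h' | h'. h' \<in> carrier G}"
    using cls[OF assms(1)] by (auto simp: is_conj_class_def)
  then obtain h' where h': "h' \<in> carrier G" "x = h' \<otimes> g \<otimes> inv h'" using assms(2) by auto
  have "h \<otimes> x \<otimes> inv h = (h \<otimes> h') \<otimes> g \<otimes> inv (h \<otimes> h')"
    using h' g assms by (simp add: conj_comp)
  thus ?thesis using g h' assms(3) by auto
qed

lemma C_conj': assumes "i < m" "x \<in> C i" "h \<in> carrier G" shows "inv h \<otimes> x \<otimes> h \<in> C i"
  using C_conj[OF assms(1,2), of "inv h"] assms(3) by simp

lemma C_conj_iff: assumes "i < m" "x \<in> carrier G" "h \<in> carrier G"
  shows "inv h \<otimes> x \<otimes> h \<in> C i \<longleftrightarrow> x \<in> C i"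
  using C_conj'[OF assms(1) _ assms(3), of x] C_conj[OF assms(1) _ assms(3), of "inv h \<otimes> x \<otimes> h"]
    conj_cancel2[OF assms(2,3)] by auto

lemma C_conj_iff2: assumes "i < m" "x \<in> carrier G" "h \<in> carrier G"
  shows "h \<otimes> x \<otimes> inv h \<in> C i \<longleftrightarrow> x \<in> C i"
  using C_conj_iff[OF assms(1,2), of "inv h"] assms(3) by simp

lemma C_same: assumes "i < m" "c \<in> C i" "g \<in> C i" shows "\<exists>h\<in>carrier G. g = h \<otimes> c \<otimes> inv h"
proof -
  obtain r where r: "r \<in> carrier G" "C i = {h' \<otimes> r \<otimes> inv h' | h'. h' \<in> carrier G}"
    using cls[OF assms(1)] by (auto simp: is_conj_class_def)
  obtain h1 where h1: "h1 \<in> carrier G" "c = h1 \<otimes> r \<otimes> inv h1" using assms(2) r by auto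
  obtain h2 where h2: "h2 \<in> carrier G" "g = h2 \<otimes> r \<otimes> inv h2" using assms(3) r by auto
  have "r = inv h1 \<otimes> c \<otimes> h1" using h1 r conj_cancel1 by simp
  hence "g = h2 \<otimes> (inv h1 \<otimes> c \<otimes> h1) \<otimes> inv h2" using h2 by simp
  also have "\<dots> = (h2 \<otimes> inv h1) \<otimes> c \<otimes> inv (h2 \<otimes> inv h1)"
    using conj_comp[of c h2 "inv h1"] h1 h2 r assms C_sub[OF assms(1)] by auto
  finally show ?thesis using h1 h2 by blast
qed

lemma O_sub: "Ocl \<subseteq> carrier G" using C_sub Odef by auto

lemma O_conj: "x \<in> Ocl \<Longrightarrow> h \<in> carrier G \<Longrightarrow> h \<otimes> x \<otimes> inv h \<in> Ocl"
  using C_conj Odef by auto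

lemma O_conj': "x \<in> Ocl \<Longrightarrow> h \<in> carrier G \<Longrightarrow> inv h \<otimes> x \<otimes> h \<in> Ocl"
  using C_conj' Odef by auto

lemma HE_refl: "HE w w" by (simp add: fact_equiv_def)

lemma HE_trans: "HE u v \<Longrightarrow> HE v w \<Longrightarrow> HE u w"
  unfolding fact_equiv_def by (rule rtranclp_trans)

lemma HE_sym: "HE u v \<Longrightarrow> HE v u"
  unfolding fact_equiv_def
proof (induction rule: rtranclp_induct)
  case base thus ?case by simp
next
  case (step y z)
  hence "(\<lambda>w w'. hurwitz_step G Ocl w w' \<or> hurwitz_step G Ocl w' w) z y" by blast
  thus ?case using step.IH by (rule converse_rtranclp_into_rtranclp)
qed

lemma step_cong: "hurwitz_step G Ocl w w' \<Longrightarrow> hurwitz_step G Ocl (p @ w @ q) (p @ w' @ q)"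
  unfolding hurwitz_step_def
  apply (elim exE conjE)
  subgoal for u v a b
    by (rule exI[of _ "p @ u"], rule exI[of _ "v @ q"], rule exI[of _ a], rule exI[of _ b]) auto
  done

lemma HE_cong: "HE w w' \<Longrightarrow> HE (p @ w @ q) (p @ w' @ q)"
  unfolding fact_equiv_def
proof (induction rule: rtranclp_induct)
  case base thus ?case by simp
next
  case (step y z)
  hence "(\<lambda>w w'. hurwitz_step G Ocl w w' \<or> hurwitz_step G Ocl w' w) (p @ y @ q) (p @ z @ q)"
    using step_cong by blast
  with step.IH show ?case by (rule rtranclp.rtrancl_into_rtrancl)
qed

lemma HE_class: "HE w w' \<Longrightarrow> fact_class G Ocl w = fact_class G Ocl w'"
  unfolding fact_class_def using HE_trans HE_sym by blast

lemma swap1: "a \<in> Ocl \<Longrightarrow> b \<in> Ocl \<Longrightarrow> HE (u @ [a, b] @ v) (u @ [b, inv b \<otimes> a \<otimes> b] @ v)"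
  unfolding fact_equiv_def
  by (rule r_into_rtranclp) (auto simp: hurwitz_step_def)

lemma swap2: "a \<in> Ocl \<Longrightarrow> b \<in> Ocl \<Longrightarrow> HE (u @ [a, b] @ v) (u @ [a \<otimes> b \<otimes> inv a, a] @ v)"
  unfolding fact_equiv_def
  by (rule r_into_rtranclp) (auto simp: hurwitz_step_def)


lemma gen_eq:
  assumes "S \<subseteq> carrier G" "T \<subseteq> carrier G" "S \<subseteq> generate G T" "T \<subseteq> generate G S"
  shows "generate G S = generate G T"
  using generate_subgroup_incl[OF assms(3) generate_is_subgroup[OF assms(2)]]
        generate_subgroup_incl[OF assms(4) generate_is_subgroup[OF assms(1)]] by blast

lemma gen_conj:
  assumes "T \<subseteq> carrier G" "x \<in> generate G T" "h \<in> generate G T"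
  shows "inv h \<otimes> x \<otimes> h \<in> generate G T" "h \<otimes> x \<otimes> inv h \<in> generate G T"
proof -
  have sg: "subgroup (generate G T) G" by (rule generate_is_subgroup[OF assms(1)])
  have ih: "inv h \<in> generate G T" using subgroup.m_inv_closed[OF sg assms(3)] .
  show "inv h \<otimes> x \<otimes> h \<in> generate G T"
    by (intro subgroup.m_closed[OF sg] ih assms(2,3))
  show "h \<otimes> x \<otimes> inv h \<in> generate G T"
    by (intro subgroup.m_closed[OF sg] ih assms(2,3))
qed

lemma prod_id1: "a \<in> carrier G \<Longrightarrow> b \<in> carrier G \<Longrightarrow> p \<in> carrier G \<Longrightarrow>
   b \<otimes> (inv b \<otimes> a \<otimes> b \<otimes> p) = a \<otimes> (b \<otimes> p)"
  by (simp add: m_assoc[symmetric])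

lemma prod_id2: "a \<in> carrier G \<Longrightarrow> b \<in> carrier G \<Longrightarrow> p \<in> carrier G \<Longrightarrow>
   a \<otimes> b \<otimes> inv a \<otimes> (a \<otimes> p) = a \<otimes> (b \<otimes> p)"
  by (simp add: m_assoc[symmetric]) (simp add: m_assoc)

lemma step_inv:
  assumes st: "hurwitz_step G Ocl w w'" and sw: "set w \<subseteq> Ocl"
  shows "set w' \<subseteq> Ocl \<and> word_prod G w' = word_prod G w \<and> word_type C m w' = word_type C m w
         \<and> generate G (set w') = generate G (set w)"
proof -
  obtain u v a b where ab: "a \<in> Ocl" "b \<in> Ocl" "w = u @ [a, b] @ v"
    and w': "w' = u @ [b, inv b \<otimes> a \<otimes> b] @ v \<or> w' = u @ [a \<otimes> b \<otimes> inv a, a] @ v"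
    using st unfolding hurwitz_step_def by blast
  have uv: "set u \<subseteq> Ocl" "set v \<subseteq> Ocl" using sw ab(3) by auto
  hence uvc: "set u \<subseteq> carrier G" "set v \<subseteq> carrier G" using O_sub by auto
  have abc: "a \<in> carrier G" "b \<in> carrier G" using ab O_sub by auto
  have pv: "word_prod G v \<in> carrier G" using word_prod_carrier uvc by blast
  have wp: "word_prod G (u @ [x, y] @ v) = word_prod G u \<otimes> (x \<otimes> (y \<otimes> word_prod G v))"
    if "x \<in> carrier G" "y \<in> carrier G" for x y
    using that uvc by (simp add: word_prod_append word_prod_Cons)
  have Tc: "set w \<subseteq> carrier G" using sw O_sub by auto
  from w' show ?thesis
  proof
    assume w'1: "w' = u @ [b, inv b \<otimes> a \<otimes> b] @ v"
    have c1: "inv b \<otimes> a \<otimes> b \<in> Ocl" using O_conj'[OF ab(1) abc(2)] .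
    have c1c: "inv b \<otimes> a \<otimes> b \<in> carrier G" using abc by simp
    have "set w' \<subseteq> Ocl" using w'1 uv ab c1 by auto
    moreover have "word_prod G w' = word_prod G w"
      using w'1 ab(3) wp abc c1c pv by (simp add: prod_id1)
    moreover have "word_type C m w' = word_type C m w"
      using w'1 ab(3) C_conj_iff[OF _ abc] by (auto simp: word_type_def fun_eq_iff)
    moreover have "generate G (set w') = generate G (set w)"
    proof (rule gen_eq)
      show "set w' \<subseteq> carrier G" using \<open>set w' \<subseteq> Ocl\<close> O_sub by auto
      show "set w \<subseteq> carrier G" by (rule Tc)
      have inc: "x \<in> set w \<Longrightarrow> x \<in> generate G (set w)" for x by (rule generate.incl)
      show "set w' \<subseteq> generate G (set w)"
        using inc gen_conj(1)[OF Tc inc[of a] inc[of b]] ab(3) w'1 by auto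
      have inc': "x \<in> set w' \<Longrightarrow> x \<in> generate G (set w')" for x by (rule generate.incl)
      have "b \<otimes> (inv b \<otimes> a \<otimes> b) \<otimes> inv b \<in> generate G (set w')"
        using gen_conj(2)[OF \<open>set w' \<subseteq> carrier G\<close> inc'[of "inv b \<otimes> a \<otimes> b"] inc'[of b]] w'1 by auto
      hence "a \<in> generate G (set w')" using conj_cancel2[OF abc] by simp
      thus "set w \<subseteq> generate G (set w')" using inc' ab(3) w'1 by auto
    qed
    ultimately show ?thesis by blast
  next
    assume w'2: "w' = u @ [a \<otimes> b \<otimes> inv a, a] @ v"
    have c1: "a \<otimes> b \<otimes> inv a \<in> Ocl" using O_conj[OF ab(2) abc(1)] .
    have c1c: "a \<otimes> b \<otimes> inv a \<in> carrier G" using abc by simp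
    have "set w' \<subseteq> Ocl" using w'2 uv ab c1 by auto
    moreover have "word_prod G w' = word_prod G w"
      using w'2 ab(3) wp abc c1c pv by (simp add: prod_id2)
    moreover have "word_type C m w' = word_type C m w"
      using w'2 ab(3) C_conj_iff2[OF _ abc(2) abc(1)] by (auto simp: word_type_def fun_eq_iff)
    moreover have "generate G (set w') = generate G (set w)"
    proof (rule gen_eq)
      show "set w' \<subseteq> carrier G" using \<open>set w' \<subseteq> Ocl\<close> O_sub by auto
      show "set w \<subseteq> carrier G" by (rule Tc)
      have inc: "x \<in> set w \<Longrightarrow> x \<in> generate G (set w)" for x by (rule generate.incl)
      show "set w' \<subseteq> generate G (set w)"
        using inc gen_conj(2)[OF Tc inc[of b] inc[of a]] ab(3) w'2 by auto
      have inc': "x \<in> set w' \<Longrightarrow> x \<in> generate G (set w')" for x by (rule generate.incl)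
      have "inv a \<otimes> (a \<otimes> b \<otimes> inv a) \<otimes> a \<in> generate G (set w')"
        using gen_conj(1)[OF \<open>set w' \<subseteq> carrier G\<close> inc'[of "a \<otimes> b \<otimes> inv a"] inc'[of a]] w'2 by auto
      hence "b \<in> generate G (set w')" using conj_cancel1[OF abc(2) abc(1)] by simp
      thus "set w \<subseteq> generate G (set w')" using inc' ab(3) w'2 by auto
    qed
    ultimately show ?thesis by blast
  qed
qed

lemma step_inv_rev: "hurwitz_step G Ocl w w' \<Longrightarrow> set w' \<subseteq> Ocl \<Longrightarrow> set w \<subseteq> Ocl"
  unfolding hurwitz_step_def by auto

lemma HE_inv:
  assumes "HE w w'" "set w \<subseteq> Ocl"
  shows "set w' \<subseteq> Ocl \<and> word_prod G w' = word_prod G w \<and> word_type C m w' = word_type C m w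
         \<and> generate G (set w') = generate G (set w)"
  using assms(1) unfolding fact_equiv_def
proof (induction rule: rtranclp_induct)
  case base thus ?case using assms(2) by simp
next
  case (step y z)
  from step.hyps(2) show ?case
  proof
    assume "hurwitz_step G Ocl y z"
    thus ?thesis using step_inv[of y z] step.IH by auto
  next
    assume st: "hurwitz_step G Ocl z y"
    hence "set z \<subseteq> Ocl" using step_inv_rev step.IH by blast
    thus ?thesis using step_inv[OF st] step.IH by auto
  qed
qed

lemma move_front:
  "c \<in> Ocl \<Longrightarrow> set u \<subseteq> Ocl \<Longrightarrow> HE (u @ [c] @ v) ([c] @ map (\<lambda>a. inv c \<otimes> a \<otimes> c) u @ v)"
proof (induction u)
  case Nil thus ?case by (simp add: HE_refl)
next
  case (Cons x u)
  have 1: "HE (x # u @ c # v) (x # c # map (\<lambda>a. inv c \<otimes> a \<otimes> c) u @ v)"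
    using HE_cong[OF Cons.IH, of "[x]" "[]"] Cons.prems by simp
  have 2: "HE (x # c # map (\<lambda>a. inv c \<otimes> a \<otimes> c) u @ v) (c # (inv c \<otimes> x \<otimes> c) # map (\<lambda>a. inv c \<otimes> a \<otimes> c) u @ v)"
    using swap1[of x c "[]" "map (\<lambda>a. inv c \<otimes> a \<otimes> c) u @ v"] Cons.prems by simp
  show ?case using HE_trans[OF 1 2] by simp
qed

lemma through:
  "c \<in> Ocl \<Longrightarrow> set u \<subseteq> Ocl \<Longrightarrow> HE (c # u) (u @ [inv (word_prod G u) \<otimes> c \<otimes> word_prod G u])"
proof (induction u arbitrary: c)
  case Nil thus ?case using O_sub by (auto simp: word_prod_Nil HE_refl)
next
  case (Cons x u)
  define c' where "c' = inv x \<otimes> c \<otimes> x"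
  have xO: "x \<in> Ocl" "set u \<subseteq> Ocl" using Cons.prems by auto
  have c'O: "c' \<in> Ocl" unfolding c'_def using O_conj'[OF Cons.prems(1)] xO O_sub by auto
  have 1: "HE (c # x # u) (x # c' # u)" using swap1[of c x "[]" u] Cons.prems xO unfolding c'_def by simp
  have 2: "HE (x # c' # u) (x # u @ [inv (word_prod G u) \<otimes> c' \<otimes> word_prod G u])"
    using HE_cong[OF Cons.IH[OF c'O xO(2)], of "[x]" "[]"] by simp
  have xc: "x \<in> carrier G" "c \<in> carrier G" "word_prod G u \<in> carrier G"
    using xO Cons.prems O_sub word_prod_carrier[of u] by auto
  have 3: "inv (word_prod G (x # u)) \<otimes> c \<otimes> word_prod G (x # u) = inv (word_prod G u) \<otimes> c' \<otimes> word_prod G u"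
    using xc by (simp add: word_prod_Cons c'_def inv_mult_group m_assoc)
  show ?case using HE_trans[OF 1 2] 3 by simp
qed

lemma through_rep:
  assumes "c \<in> Ocl" "set u \<subseteq> Ocl"
  shows "HE (replicate k c @ u) (u @ replicate k (inv (word_prod G u) \<otimes> c \<otimes> word_prod G u))"
proof (induction k)
  case 0 thus ?case by (simp add: HE_refl)
next
  case (Suc k)
  define c' where "c' = inv (word_prod G u) \<otimes> c \<otimes> word_prod G u"
  have 1: "HE (c # replicate k c @ u) (c # u @ replicate k c')"
    using HE_cong[OF Suc.IH, of "[c]" "[]"] unfolding c'_def by simp
  have 2: "HE (c # u @ replicate k c') (u @ c' # replicate k c')"
    using HE_cong[OF through[OF assms], of "[]" "replicate k c'"] unfolding c'_def by simp
  show ?case using HE_trans[OF 1 2] unfolding c'_def by simp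
qed

lemma central_gen:
  assumes "c \<in> Ocl" "x \<in> Ocl"
  shows "HE (replicate k c @ [x]) ((c [^] k \<otimes> x \<otimes> inv (c [^] k)) # replicate k c)"
proof (induction k)
  case 0 thus ?case using assms O_sub by (auto simp: HE_refl)
next
  case (Suc k)
  have cc: "c \<in> carrier G" "x \<in> carrier G" using assms O_sub by auto
  define y where "y = c [^] k \<otimes> x \<otimes> inv (c [^] k)"
  have yO: "y \<in> Ocl" unfolding y_def using O_conj assms cc by auto
  have 1: "HE (c # replicate k c @ [x]) (c # y # replicate k c)"
    using HE_cong[OF Suc.IH, of "[c]" "[]"] unfolding y_def by simp
  have 2: "HE (c # y # replicate k c) ((c \<otimes> y \<otimes> inv c) # c # replicate k c)"
    using swap2[OF assms(1) yO, of "[]" "replicate k c"] by simp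
  have 3: "c \<otimes> y \<otimes> inv c = c [^] Suc k \<otimes> x \<otimes> inv (c [^] Suc k)"
    unfolding y_def using conj_comp[of x c "c [^] k"] cc nat_pow_Suc2[of c k] by simp
  show ?case using HE_trans[OF 1 2] 3 by simp
qed

lemma central:
  assumes "c \<in> Ocl" "set u \<subseteq> Ocl"
  shows "HE (replicate (order G) c @ u) (u @ replicate (order G) c)"
  using assms(2)
proof (induction u)
  case Nil thus ?case by (simp add: HE_refl)
next
  case (Cons x u)
  have cc: "c \<in> carrier G" using assms O_sub by auto
  have xc: "x \<in> carrier G" using Cons.prems O_sub by auto
  have 1: "HE (replicate (order G) c @ x # u) (x # replicate (order G) c @ u)"
    using HE_cong[OF central_gen[OF assms(1), of x "order G"], of "[]" u] Cons.prems
      pow_order_eq_1[OF cc] cc xc by simp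
  have 2: "HE (x # replicate (order G) c @ u) (x # u @ replicate (order G) c)"
    using HE_cong[OF Cons.IH, of "[x]" "[]"] Cons.prems by simp
  show ?case using HE_trans[OF 1 2] by simp
qed


lemma absorb_pre:
  assumes u: "set u \<subseteq> Ocl" and v: "set v \<subseteq> Ocl"
  shows "\<forall>c\<in>Ocl. HE (replicate (order G) c @ u @ v)
           (replicate (order G) (word_prod G u \<otimes> c \<otimes> inv (word_prod G u)) @ u @ v)"
proof
  fix c assume cO: "c \<in> Ocl"
  define N where "N = order G"
  define p where "p = word_prod G u"
  have pc: "p \<in> carrier G" unfolding p_def using word_prod_carrier u O_sub by blast
  define c' where "c' = p \<otimes> c \<otimes> inv p"
  have c'O: "c' \<in> Ocl" unfolding c'_def using O_conj cO pc by blast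
  have 1: "HE (replicate N c @ u @ v) (u @ replicate N c @ v)"
    using HE_cong[OF central[OF cO u], of "[]" v] unfolding N_def by simp
  have 2: "HE (replicate N c' @ u @ v) (u @ replicate N (inv p \<otimes> c' \<otimes> p) @ v)"
    using HE_cong[OF through_rep[OF c'O u, of N], of "[]" v] unfolding p_def by simp
  have 3: "inv p \<otimes> c' \<otimes> p = c" unfolding c'_def using conj_cancel1 cO O_sub pc by auto
  have t2: "HE (replicate N c' @ u @ v) (u @ replicate N c @ v)" using 2 3 by simp
  have "HE (replicate N c @ u @ v) (replicate N c' @ u @ v)"
    using HE_trans[OF 1 HE_sym[OF t2]] .
  thus "HE (replicate (order G) c @ u @ v)
           (replicate (order G) (word_prod G u \<otimes> c \<otimes> inv (word_prod G u)) @ u @ v)"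
    unfolding N_def c'_def p_def .
qed

lemma absorb:
  assumes s: "set s \<subseteq> Ocl" "generate G (set s) = carrier G" and c: "c \<in> Ocl" and h: "h \<in> carrier G"
  shows "HE (replicate (order G) c @ s) (replicate (order G) (h \<otimes> c \<otimes> inv h) @ s)"
proof -
  define N where "N = order G"
  define H where "H = {h \<in> carrier G. \<forall>c\<in>Ocl. HE (replicate N c @ s) (replicate N (h \<otimes> c \<otimes> inv h) @ s)}"
  have pre: "word_prod G u \<in> H" if uv: "s = u @ v" for u v
  proof -
    have u: "set u \<subseteq> Ocl" and v: "set v \<subseteq> Ocl" using s(1) uv by auto
    have pc: "word_prod G u \<in> carrier G" using word_prod_carrier u O_sub by blast
    have "\<forall>c\<in>Ocl. HE (replicate N c @ s) (replicate N (word_prod G u \<otimes> c \<otimes> inv (word_prod G u)) @ s)"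
      using absorb_pre[OF u v] uv unfolding N_def by simp
    thus ?thesis using pc unfolding H_def by blast
  qed
  have Hc: "H \<subseteq> carrier G" by (auto simp: H_def)
  have mult: "h1 \<otimes> h2 \<in> H" if "h1 \<in> H" "h2 \<in> H" for h1 h2
  proof -
    have hc: "h1 \<in> carrier G" "h2 \<in> carrier G" using that Hc by auto
    show ?thesis unfolding H_def
    proof (intro CollectI conjI ballI)
      show "h1 \<otimes> h2 \<in> carrier G" using hc by simp
      fix c assume cO: "c \<in> Ocl"
      have c2: "h2 \<otimes> c \<otimes> inv h2 \<in> Ocl" using O_conj cO hc by blast
      have 1: "HE (replicate N c @ s) (replicate N (h2 \<otimes> c \<otimes> inv h2) @ s)" using that(2) cO by (auto simp: H_def)
      have 2: "HE (replicate N (h2 \<otimes> c \<otimes> inv h2) @ s) (replicate N (h1 \<otimes> (h2 \<otimes> c \<otimes> inv h2) \<otimes> inv h1) @ s)"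
        using that(1) c2 by (auto simp: H_def)
      have 3: "h1 \<otimes> (h2 \<otimes> c \<otimes> inv h2) \<otimes> inv h1 = h1 \<otimes> h2 \<otimes> c \<otimes> inv (h1 \<otimes> h2)"
        using conj_comp cO O_sub hc by auto
      show "HE (replicate N c @ s) (replicate N (h1 \<otimes> h2 \<otimes> c \<otimes> inv (h1 \<otimes> h2)) @ s)"
        using HE_trans[OF 1 2] 3 by simp
    qed
  qed
  have invc: "inv h \<in> H" if "h \<in> H" for h
  proof -
    have hc: "h \<in> carrier G" using that Hc by auto
    show ?thesis unfolding H_def
    proof (intro CollectI conjI ballI)
      show "inv h \<in> carrier G" using hc by simp
      fix c assume cO: "c \<in> Ocl"
      have c0: "inv h \<otimes> c \<otimes> h \<in> Ocl" using O_conj' cO hc by blast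
      have 1: "HE (replicate N (inv h \<otimes> c \<otimes> h) @ s) (replicate N (h \<otimes> (inv h \<otimes> c \<otimes> h) \<otimes> inv h) @ s)"
        using that c0 by (auto simp: H_def)
      have 2: "h \<otimes> (inv h \<otimes> c \<otimes> h) \<otimes> inv h = c" using conj_cancel2 cO O_sub hc by auto
      show "HE (replicate N c @ s) (replicate N (inv h \<otimes> c \<otimes> inv (inv h)) @ s)"
        using HE_sym[OF 1] 2 hc by simp
    qed
  qed
  have one: "\<one> \<in> H" using pre[of "[]" s] by (simp add: word_prod_Nil)
  have sg: "subgroup H G"
    by (rule subgroup.intro[OF Hc]) (auto intro: mult invc one)
  have "set s \<subseteq> H"
  proof
    fix f assume "f \<in> set s"
    then obtain u v where uv: "s = u @ f # v" by (meson split_list)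
    have p1: "word_prod G u \<in> H" using pre[of u "f # v"] uv by simp
    have p2: "word_prod G (u @ [f]) \<in> H" using pre[of "u @ [f]" v] uv by simp
    have fc: "f \<in> carrier G" "set u \<subseteq> carrier G" using uv s(1) O_sub by auto
    have pc: "word_prod G u \<in> carrier G" using word_prod_carrier fc by blast
    have "word_prod G (u @ [f]) = word_prod G u \<otimes> f"
      using fc by (simp add: word_prod_append word_prod_Cons word_prod_Nil)
    hence "inv (word_prod G u) \<otimes> word_prod G (u @ [f]) = f"
      using fc pc by (simp add: m_assoc[symmetric])
    thus "f \<in> H" using mult[OF invc[OF p1] p2] by simp
  qed
  hence "generate G (set s) \<subseteq> H" using generate_subgroup_incl[OF _ sg] by blast
  hence "h \<in> H" using s(2) h by auto
  thus ?thesis using c unfolding H_def N_def by blast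
qed

lemma count_conj:
  assumes "c \<in> carrier G" "set u \<subseteq> carrier G"
  shows "count_list (map (\<lambda>a. inv c \<otimes> a \<otimes> c) u) c = count_list u c"
  using assms(2)
proof (induction u)
  case Nil thus ?case by simp
next
  case (Cons x u)
  have xc: "x \<in> carrier G" using Cons.prems by auto
  have "(inv c \<otimes> x \<otimes> c = c) \<longleftrightarrow> (x = c)"
  proof
    assume "inv c \<otimes> x \<otimes> c = c"
    hence "c \<otimes> (inv c \<otimes> x \<otimes> c) \<otimes> inv c = c \<otimes> c \<otimes> inv c" by simp
    thus "x = c" using conj_cancel2[OF xc assms(1)] assms(1) by (simp add: m_assoc)
  next
    assume "x = c" thus "inv c \<otimes> x \<otimes> c = c" using assms(1) by simp
  qed
  thus ?case using Cons by simp
qed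

lemma gather:
  assumes "c \<in> Ocl"
  shows "set w \<subseteq> Ocl \<Longrightarrow> k \<le> count_list w c \<Longrightarrow> \<exists>r. set r \<subseteq> Ocl \<and> HE w (replicate k c @ r)"
proof (induction k arbitrary: w)
  case 0 thus ?case using HE_refl by auto
next
  case (Suc k)
  have "count_list w c \<noteq> 0" using Suc.prems by simp
  hence "c \<in> set w" by (simp add: count_list_0_iff)
  then obtain u v where uv: "w = u @ c # v" by (meson split_list)
  define w1 where "w1 = map (\<lambda>a. inv c \<otimes> a \<otimes> c) u @ v"
  have u: "set u \<subseteq> Ocl" "set v \<subseteq> Ocl" using Suc.prems uv by auto
  have cc: "c \<in> carrier G" using assms O_sub by auto
  have w1O: "set w1 \<subseteq> Ocl" unfolding w1_def using u O_conj' cc by auto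
  have "count_list w1 c = count_list u c + count_list v c"
    unfolding w1_def using count_conj[OF cc] u O_sub by auto
  moreover have "count_list w c = count_list u c + 1 + count_list v c" using uv by simp
  ultimately have "k \<le> count_list w1 c" using Suc.prems by simp
  then obtain r where r: "set r \<subseteq> Ocl" "HE w1 (replicate k c @ r)" using Suc.IH w1O by blast
  have 1: "HE w (c # w1)" using move_front[OF assms u(1), of v] uv unfolding w1_def by simp
  have 2: "HE (c # w1) (c # replicate k c @ r)" using HE_cong[OF r(2), of "[c]" "[]"] by simp
  show ?case using HE_trans[OF 1 2] r(1) by auto
qed

end

lemma len_filter_sum:
  assumes "finite A"
  shows "length (filter (\<lambda>g. g \<in> A) w) = (\<Sum>c\<in>A. count_list w c)"
proof (induction w)
  case Nil thus ?case by simp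
next
  case (Cons x w)
  have "(\<Sum>c\<in>A. count_list (x # w) c) = (\<Sum>c\<in>A. count_list w c + (if x = c then 1 else 0))"
    by (rule sum.cong) auto
  also have "\<dots> = (\<Sum>c\<in>A. count_list w c) + (if x \<in> A then 1 else 0)"
    using assms by (simp add: sum.distrib)
  finally show ?case using Cons by simp
qed

lemma pigeon:
  assumes "finite A" "card A * B < length (filter (\<lambda>g. g \<in> A) w)"
  shows "\<exists>c\<in>A. B < count_list w c"
proof (rule ccontr)
  assume "\<not> ?thesis"
  hence "(\<Sum>c\<in>A. count_list w c) \<le> card A * B"
    using sum_bounded_above[of A "\<lambda>c. count_list w c" B] by (auto simp: not_less)
  thus False using assms len_filter_sum[OF assms(1), of w] by simp
qed


context hsetup
begin

lemma order_pos: "1 \<le> order G"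
  using fin one_closed by (auto simp: order_def card_gt_0_iff Suc_le_eq)

lemma len_le_type: "set w \<subseteq> Ocl \<Longrightarrow> length w \<le> (\<Sum>i<m. word_type C m w i)"
proof (induction w)
  case Nil thus ?case by simp
next
  case (Cons x w)
  obtain j where j: "j < m" "x \<in> C j" using Cons.prems Odef by auto
  have "(\<Sum>i<m. word_type C m (x # w) i) = (\<Sum>i<m. word_type C m w i + (if x \<in> C i then 1 else 0))"
    by (rule sum.cong) (auto simp: word_type_def)
  also have "\<dots> = (\<Sum>i<m. word_type C m w i) + (\<Sum>i<m. (if x \<in> C i then 1 else 0))"
    by (simp add: sum.distrib)
  finally have eq: "(\<Sum>i<m. word_type C m (x # w) i) = (\<Sum>i<m. word_type C m w i) + (\<Sum>i<m. (if x \<in> C i then 1 else 0))" .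
  have "(1::nat) \<le> (\<Sum>i<m. (if x \<in> C i then 1 else 0))"
  proof -
    have "(if x \<in> C j then 1 else 0) \<le> (\<Sum>i<m. (if x \<in> C i then 1 else (0::nat)))"
      by (rule member_le_sum) (use j in auto)
    thus ?thesis using j by simp
  qed
  thus ?case using eq Cons by simp
qed

lemma mono_h:
  assumes k: "k \<in> exps m" and i: "i < m" and ki: "2 * order G * order G \<le> k i"
  shows "h_coeff G Ocl C m (k(i := k i + order G)) \<le> h_coeff G Ocl C m k"
proof -
  define N where "N = order G"
  define A where "A k = {w. set w \<subseteq> Ocl \<and> generate G (set w) = carrier G \<and> word_prod G w = \<one> \<and> word_type C m w = k}" for k
  have hA: "h_coeff G Ocl C m k = card (fact_class G Ocl ` A k)" for k unfolding h_coeff_def A_def by simp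
  have Npos: "1 \<le> N" using order_pos by (simp add: N_def)
  have Ofin: "finite Ocl" using O_sub fin finite_subset by blast
  have finA: "finite (A k)" for k
  proof (rule finite_subset[OF _ finite_lists_length_le[OF Ofin, of "\<Sum>i<m. k i"]])
    show "A k \<subseteq> {xs. set xs \<subseteq> Ocl \<and> length xs \<le> (\<Sum>i<m. k i)}"
      using len_le_type by (auto simp: A_def)
  qed
  obtain r where r: "r \<in> carrier G" "C i = {h \<otimes> r \<otimes> inv h | h. h \<in> carrier G}"
    using cls[OF i] by (auto simp: is_conj_class_def)
  have "\<one> \<otimes> r \<otimes> inv \<one> = r" using r by simp
  hence "r \<in> {h \<otimes> r \<otimes> inv h | h. h \<in> carrier G}" by (auto intro!: exI[of _ "\<one>"])
  hence g: "r \<in> C i" using r(2) by simp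
  define g where "g = r"
  have gC: "g \<in> C i" using g by (simp add: g_def)
  have gO: "g \<in> Ocl" using gC i Odef by auto
  have gc: "g \<in> carrier G" using gO O_sub by auto
  define k' where "k' = k(i := k i + N)"
  have claim: "\<exists>w\<in>A k. HE w' (replicate N g @ w)" if w': "w' \<in> A k'" for w'
  proof -
    have w'O: "set w' \<subseteq> Ocl" and w'g: "generate G (set w') = carrier G"
      and w'p: "word_prod G w' = \<one>" and w't: "word_type C m w' = k'"
      using w' by (auto simp: A_def)
    have len: "length (filter (\<lambda>x. x \<in> C i) w') = k i + N"
      using fun_cong[OF w't, of i] i by (simp add: word_type_def k'_def)
    have finC: "finite (C i)" using C_sub[OF i] fin finite_subset by blast
    have cardC: "card (C i) \<le> N" unfolding N_def order_def using C_sub[OF i] fin by (rule card_mono[rotated])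
    have "card (C i) * (2 * N - 1) \<le> N * (2 * N - 1)" using cardC by (rule mult_right_mono) simp
    also have "\<dots> \<le> N * (2 * N)" by (rule mult_left_mono) auto
    also have "\<dots> \<le> k i" using ki by (simp add: N_def mult.commute mult.left_commute)
    also have "\<dots> < length (filter (\<lambda>x. x \<in> C i) w')" using len Npos by simp
    finally have lt: "card (C i) * (2 * N - 1) < length (filter (\<lambda>x. x \<in> C i) w')" .
    obtain c where c: "c \<in> C i" "2 * N - 1 < count_list w' c"
      using pigeon[OF finC lt] by blast
    have cO: "c \<in> Ocl" using c i Odef by auto
    have cnt: "2 * N \<le> count_list w' c" using c(2) Npos by simp
    obtain r where r: "set r \<subseteq> Ocl" "HE w' (replicate (2 * N) c @ r)"
      using gather[OF cO w'O cnt] by blast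
    define s where "s = replicate N c @ r"
    have "replicate (2 * N) c @ r = replicate N c @ s"
      unfolding s_def using replicate_add[of N N c] by (simp add: mult_2)
    hence E1: "HE w' (replicate N c @ s)" using r by simp
    have setEq: "set (replicate N c @ s) = set s" using Npos by (auto simp: s_def)
    have sO: "set s \<subseteq> Ocl" using r(1) cO by (auto simp: s_def)
    have sg: "generate G (set s) = carrier G" using HE_inv[OF E1 w'O] setEq w'g by simp
    obtain h where h: "h \<in> carrier G" "g = h \<otimes> c \<otimes> inv h" using C_same[OF i c(1) gC] by blast
    have E2: "HE (replicate N c @ s) (replicate N g @ s)"
      using absorb[OF sO sg cO h(1)] h(2) unfolding N_def by simp
    have E: "HE w' (replicate N g @ s)" using HE_trans[OF E1 E2] .
    have I: "word_prod G (replicate N g @ s) = \<one>" "word_type C m (replicate N g @ s) = k'"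
      using HE_inv[OF E w'O] w'p w't by simp_all
    have sc: "set s \<subseteq> carrier G" using sO O_sub by auto
    have "set (replicate N g) \<subseteq> carrier G" using gc by (auto simp: in_set_replicate)
    hence "word_prod G (replicate N g @ s) = word_prod G (replicate N g) \<otimes> word_prod G s"
      by (rule word_prod_append[OF _ sc])
    also have "word_prod G (replicate N g) = \<one>"
      using word_prod_replicate[OF gc, of N] pow_order_eq_1[OF gc] unfolding N_def by simp
    finally have "word_prod G (replicate N g @ s) = word_prod G s"
      using word_prod_carrier[OF sc] by simp
    hence sp: "word_prod G s = \<one>" using I(1) by simp
    have st: "word_type C m s = k"
    proof (rule ext)
      fix j
      show "word_type C m s j = k j"
      proof (cases "j < m")
        case True
        have jm: "j < m" by fact
        have gj: "g \<in> C j \<longleftrightarrow> j = i"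
        proof (cases "j = i")
          case True thus ?thesis using gC by simp
        next
          case False
          have "C j \<inter> C i = {}" using disj[OF jm i False] .
          hence "g \<notin> C j" using gC by (auto simp: disjoint_iff)
          thus ?thesis using False by simp
        qed
        have "word_type C m (replicate N g @ s) j = (if j = i then N else 0) + word_type C m s j"
          using jm gj by (simp add: word_type_def filter_replicate)
        moreover have "word_type C m (replicate N g @ s) j = k' j" using I(2) by simp
        ultimately have "(if j = i then N else 0) + word_type C m s j = k' j" by simp
        thus ?thesis by (cases "j = i") (simp_all add: k'_def)
      next
        case False thus ?thesis using k by (simp add: word_type_def exps_def)
      qed
    qed
    have "s \<in> A k" unfolding A_def using sO sg sp st by blast
    thus ?thesis using E by blast
  qed
  define \<Phi> where "\<Phi> Y = fact_class G Ocl (replicate N g @ (SOME w. w \<in> Y))" for Y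
  have \<Phi>eq: "\<Phi> (fact_class G Ocl w) = fact_class G Ocl (replicate N g @ w)" for w
  proof -
    have "w \<in> fact_class G Ocl w" by (simp add: fact_class_def HE_refl)
    hence "(SOME x. x \<in> fact_class G Ocl w) \<in> fact_class G Ocl w" by (rule someI)
    hence hw: "HE w (SOME x. x \<in> fact_class G Ocl w)" by (simp add: fact_class_def)
    have "HE (replicate N g @ w) (replicate N g @ (SOME x. x \<in> fact_class G Ocl w))"
      using HE_cong[OF hw, of "replicate N g" "[]"] by simp
    hence "fact_class G Ocl (replicate N g @ w) = fact_class G Ocl (replicate N g @ (SOME x. x \<in> fact_class G Ocl w))"
      by (rule HE_class)
    thus ?thesis unfolding \<Phi>_def by simp
  qed
  have sub: "fact_class G Ocl ` A k' \<subseteq> \<Phi> ` (fact_class G Ocl ` A k)"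
  proof
    fix Y assume "Y \<in> fact_class G Ocl ` A k'"
    then obtain w' where w': "w' \<in> A k'" "Y = fact_class G Ocl w'" by blast
    obtain w where w: "w \<in> A k" "HE w' (replicate N g @ w)" using claim[OF w'(1)] by blast
    have "Y = \<Phi> (fact_class G Ocl w)" using w'(2) HE_class[OF w(2)] \<Phi>eq by simp
    thus "Y \<in> \<Phi> ` (fact_class G Ocl ` A k)" using w(1) by blast
  qed
  have "card (fact_class G Ocl ` A k') \<le> card (\<Phi> ` (fact_class G Ocl ` A k))"
    by (rule card_mono[OF _ sub]) (intro finite_imageI finA)
  also have "\<dots> \<le> card (fact_class G Ocl ` A k)"
    by (rule card_image_le) (intro finite_imageI finA)
  finally show ?thesis using hA unfolding k'_def N_def by simp
qed

end


theorem theorem4p6: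
  fixes G :: "('a, 'b) monoid_scheme" and Ocl :: "'a set" and C :: "nat \<Rightarrow> 'a set" and m :: nat
  assumes "group G"
    and "finite (carrier G)"
    and "\<And>i. i < m \<Longrightarrow> is_conj_class G (C i)"
    and "\<And>i j. i < m \<Longrightarrow> j < m \<Longrightarrow> i \<noteq> j \<Longrightarrow> C i \<inter> C j = {}"
    and "\<And>i. i < m \<Longrightarrow> C i \<noteq> {\<one>\<^bsub>G\<^esub>}"
    and "\<And>i. i < m \<Longrightarrow> generate G (C i) = carrier G"
    and "Ocl = (\<Union>i<m. C i)"
  shows "rational_series m (\<lambda>k. of_nat (h_coeff G Ocl C m k))"
proof -
  have hs: "hsetup G Ocl C m"
    using assms by (simp add: hsetup_def hsetup_axioms_def)
  interpret hsetup G Ocl C m by (rule hs)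
  have Npos: "1 \<le> order G" by (rule order_pos)
  have mono: "\<forall>k\<in>exps m. \<forall>i<m. 2 * order G * order G \<le> k i \<longrightarrow>
      h_coeff G Ocl C m (k(i := k i + order G)) \<le> h_coeff G Ocl C m k"
    using mono_h by blast
  obtain M where M: "\<forall>k\<in>exps m. \<forall>i<m. M \<le> k i \<longrightarrow>
      h_coeff G Ocl C m (k(i := k i + order G)) = h_coeff G Ocl C m k"
    using cell_stab[OF Npos mono] by blast
  show ?thesis by (rule periodic_rational[OF Npos M])
qed

end
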